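(* Let $L\subseteq\mathcal{L}$ satisfy \[\forall e\in L:\quad\sum_{\{e'\in L\setminus\{e\}:d_{e'}\ge d_e\}}\big(\bar a_e(e')+\bar a_{e'}(e)\big)\le1.\] Then there exists $J\subseteq L$ such that $|J|\ge|L|/2$ and $\sum_{e'\in J\setminus\{e\}}\bar a_{e'}(e)\le3$ for every $e\in J$.
   Context: Constants $\alpha\ge0,N>0,\beta>0$. A link is $e=(s_e,r_e,P_e)$ with transmitter, receiver (points in the plane) and power $P_e>0$; $\mathcal{L}$ is the set of links. $d_e=d(s_e,r_e)$, $d_{e'e}=d(s_{e'},r_e)$, $S_e=P_e/d_e^\alpha$, $S_{e'e}=P_{e'}/d_{e'e}^\alpha$, $\gamma_e=\beta S_e/(S_e-\beta N)$, $a_{e'}(e)=\gamma_eS_{e'e}/S_e$, $\bar a_{e'}(e)=\min\{1,a_{e'}(e)\}$. *)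

theory Defs
  imports "HOL-Analysis.Analysis"
begin

text \<open>A link: transmitter, receiver (points in the plane) and power.\<close>
type_synonym link = "(real^2) \<times> (real^2) \<times> real"

definition snd_pt :: "link \<Rightarrow> real^2" where "snd_pt e = fst e"
definition rcv_pt :: "link \<Rightarrow> real^2" where "rcv_pt e = fst (snd e)"
definition pow :: "link \<Rightarrow> real" where "pow e = snd (snd e)"

definition len :: "link \<Rightarrow> real" where "len e = dist (snd_pt e) (rcv_pt e)"
definition xlen :: "link \<Rightarrow> link \<Rightarrow> real" where
  "xlen e' e = dist (snd_pt e') (rcv_pt e)"

definition sig :: "real \<Rightarrow> link \<Rightarrow> real" where
  "sig \<alpha> e = pow e / (len e powr \<alpha>)"
definition xsig :: "real \<Rightarrow> link \<Rightarrow> link \<Rightarrow> real" where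
  "xsig \<alpha> e' e = pow e' / (xlen e' e powr \<alpha>)"

definition gam :: "real \<Rightarrow> real \<Rightarrow> real \<Rightarrow> link \<Rightarrow> real" where
  "gam \<alpha> \<beta> N e = \<beta> * sig \<alpha> e / (sig \<alpha> e - \<beta> * N)"

definition aff :: "real \<Rightarrow> real \<Rightarrow> real \<Rightarrow> link \<Rightarrow> link \<Rightarrow> real" where
  "aff \<alpha> \<beta> N e' e = gam \<alpha> \<beta> N e * xsig \<alpha> e' e / sig \<alpha> e"
definition affb :: "real \<Rightarrow> real \<Rightarrow> real \<Rightarrow> link \<Rightarrow> link \<Rightarrow> real" where
  "affb \<alpha> \<beta> N e' e = min 1 (aff \<alpha> \<beta> N e' e)"

end

theory Submission
  imports Defs
begin

lemma affb_nonneg: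
  assumes "\<beta> > 0" "N > 0" "pow e' > 0" "sig \<alpha> e > \<beta> * N"
  shows "affb \<alpha> \<beta> N e' e \<ge> 0"
proof -
  have s: "sig \<alpha> e > 0" using assms by (smt (verit) mult_pos_pos)
  have g: "gam \<alpha> \<beta> N e > 0" unfolding gam_def using assms s by simp
  have x: "xsig \<alpha> e' e \<ge> 0" unfolding xsig_def using assms by simp
  have "aff \<alpha> \<beta> N e' e \<ge> 0" unfolding aff_def using g x s by simp
  thus ?thesis unfolding affb_def by simp
qed

theorem lemma8:
  fixes \<alpha> \<beta> N :: real and L :: "link set"
  assumes "\<alpha> \<ge> 0" and "N > 0" and "\<beta> > 0"
    and "finite L"
    and "\<forall>e\<in>L. pow e > 0"
    and "\<forall>e\<in>L. sig \<alpha> e > \<beta> * N"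
    and "\<forall>e\<in>L. (\<Sum>e'\<in>{e'\<in>L - {e}. len e' \<ge> len e}.
                    affb \<alpha> \<beta> N e e' + affb \<alpha> \<beta> N e' e) \<le> 1"
  shows "\<exists>J\<subseteq>L. real (card J) \<ge> real (card L) / 2 \<and>
           (\<forall>e\<in>J. (\<Sum>e'\<in>J - {e}. affb \<alpha> \<beta> N e' e) \<le> 3)"
proof -
  define g where "g = affb \<alpha> \<beta> N"
  have nn: "\<And>e e'. e \<in> L \<Longrightarrow> e' \<in> L \<Longrightarrow> g e' e \<ge> 0"
    unfolding g_def using assms affb_nonneg by blast
  define S where "S e = (\<Sum>e'\<in>L - {e}. g e' e)" for e
  have fin: "finite L" by fact
  have S1: "S e = (\<Sum>e'\<in>L. (if e' \<noteq> e \<and> len e \<le> len e' then g e' e else 0))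
          + (\<Sum>e'\<in>L. (if e' \<noteq> e \<and> len e' < len e then g e' e else 0))" for e
  proof -
    have "S e = (\<Sum>e'\<in>{e'\<in>L. e' \<noteq> e}. g e' e)" unfolding S_def
      by (rule sum.cong) auto
    also have "\<dots> = (\<Sum>e'\<in>L. if e' \<noteq> e then g e' e else 0)"
      using sum.inter_filter[OF fin] by simp
    also have "\<dots> = (\<Sum>e'\<in>L. (if e' \<noteq> e \<and> len e \<le> len e' then g e' e else 0)
          + (if e' \<noteq> e \<and> len e' < len e then g e' e else 0))"
      by (rule sum.cong) auto
    finally show ?thesis by (simp add: sum.distrib)
  qed
  have swap: "(\<Sum>e\<in>L. \<Sum>e'\<in>L. (if e' \<noteq> e \<and> len e' < len e then g e' e else 0))
      = (\<Sum>e\<in>L. \<Sum>e'\<in>L. (if e \<noteq> e' \<and> len e < len e' then g e e' else 0))"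
    by (rule sum.swap)
  have le2: "(\<Sum>e\<in>L. \<Sum>e'\<in>L. (if e \<noteq> e' \<and> len e < len e' then g e e' else 0))
      \<le> (\<Sum>e\<in>L. \<Sum>e'\<in>L. (if e' \<noteq> e \<and> len e \<le> len e' then g e e' else 0))"
    by (intro sum_mono) (auto intro: nn)
  have tot: "(\<Sum>e\<in>L. S e) \<le> real (card L)"
  proof -
    have "(\<Sum>e\<in>L. S e) \<le> (\<Sum>e\<in>L. \<Sum>e'\<in>L. (if e' \<noteq> e \<and> len e \<le> len e' then g e' e + g e e' else 0))"
    proof -
      have "(\<Sum>e\<in>L. S e) = (\<Sum>e\<in>L. \<Sum>e'\<in>L. (if e' \<noteq> e \<and> len e \<le> len e' then g e' e else 0))
          + (\<Sum>e\<in>L. \<Sum>e'\<in>L. (if e' \<noteq> e \<and> len e' < len e then g e' e else 0))"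
        unfolding S1 by (rule sum.distrib)
      also have "\<dots> \<le> (\<Sum>e\<in>L. \<Sum>e'\<in>L. (if e' \<noteq> e \<and> len e \<le> len e' then g e' e else 0))
          + (\<Sum>e\<in>L. \<Sum>e'\<in>L. (if e' \<noteq> e \<and> len e \<le> len e' then g e e' else 0))"
        using le2 swap by linarith
      also have "\<dots> = (\<Sum>e\<in>L. \<Sum>e'\<in>L. (if e' \<noteq> e \<and> len e \<le> len e' then g e' e else 0)
           + (if e' \<noteq> e \<and> len e \<le> len e' then g e e' else 0))"
        by (simp only: sum.distrib)
      also have "\<dots> = (\<Sum>e\<in>L. \<Sum>e'\<in>L. (if e' \<noteq> e \<and> len e \<le> len e' then g e' e + g e e' else 0))"
        by (intro sum.cong refl) auto
      finally show ?thesis .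
    qed
    also have "\<dots> = (\<Sum>e\<in>L. \<Sum>e'\<in>{e'\<in>L - {e}. len e' \<ge> len e}. g e e' + g e' e)"
    proof (rule sum.cong[OF refl])
      fix e assume "e \<in> L"
      have "(\<Sum>e'\<in>{e'\<in>L - {e}. len e' \<ge> len e}. g e e' + g e' e)
          = (\<Sum>e'\<in>{e'\<in>L. e' \<noteq> e \<and> len e \<le> len e'}. g e' e + g e e')"
        by (rule sum.cong) auto
      also have "\<dots> = (\<Sum>e'\<in>L. (if e' \<noteq> e \<and> len e \<le> len e' then g e' e + g e e' else 0))"
        using sum.inter_filter[OF fin] by simp
      finally show "(\<Sum>e'\<in>L. (if e' \<noteq> e \<and> len e \<le> len e' then g e' e + g e e' else 0))
          = (\<Sum>e'\<in>{e'\<in>L - {e}. len e' \<ge> len e}. g e e' + g e' e)" by simp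
    qed
    also have "\<dots> \<le> (\<Sum>e\<in>L. 1)"
      by (rule sum_mono) (use assms(7) in \<open>simp add: g_def\<close>)
    finally show ?thesis by simp
  qed
  have Snn: "e \<in> L \<Longrightarrow> S e \<ge> 0" for e unfolding S_def by (rule sum_nonneg) (auto intro: nn)
  define J where "J = {e\<in>L. S e \<le> 2}"
  have JL: "J \<subseteq> L" unfolding J_def by auto
  have "2 * real (card (L - J)) = (\<Sum>e\<in>L - J. 2)" by simp
  also have "\<dots> \<le> (\<Sum>e\<in>L - J. S e)" by (rule sum_mono) (auto simp: J_def)
  also have "\<dots> \<le> (\<Sum>e\<in>L. S e)" by (rule sum_mono2) (auto simp: fin Snn)
  finally have "2 * real (card (L - J)) \<le> real (card L)" using tot by simp
  moreover have "card (L - J) = card L - card J" using JL fin by (simp add: card_Diff_subset finite_subset)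
  moreover have "card J \<le> card L" using JL fin by (simp add: card_mono)
  ultimately have c: "real (card J) \<ge> real (card L) / 2" by (simp add: of_nat_diff)
  have "\<forall>e\<in>J. (\<Sum>e'\<in>J - {e}. g e' e) \<le> 3"
  proof
    fix e assume e: "e \<in> J"
    have "(\<Sum>e'\<in>J - {e}. g e' e) \<le> S e" unfolding S_def
      by (rule sum_mono2) (use JL e fin nn in \<open>auto simp: J_def\<close>)
    also have "\<dots> \<le> 2" using e by (simp add: J_def)
    finally show "(\<Sum>e'\<in>J - {e}. g e' e) \<le> 3" by simp
  qed
  thus ?thesis using JL c unfolding g_def by blast
qed

end
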